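(* If $m\ge 38$ is even and $m=3t$ for some positive integer $t$, then $\lambda(L_m)<\lambda(Y_m)$.
   Context: $\lambda(\cdot)$ denotes the largest adjacency eigenvalue. For even $m$, $L_m$ is obtained from a 5-cycle $u_1u_2u_3u_4u_5$ by adding $\frac{m-6}{2}$ new vertices each adjacent exactly to $u_1$ and $u_3$, and one new vertex adjacent only to $u_1$ (equivalently, $SK_{2,\frac{m-2}{2}}$, i.e. $K_{2,\frac{m-2}{2}}$ with one edge subdivided, with a pendant edge attached at a vertex of maximum degree). When $\frac{m-3}{3}$ is a positive integer, $Y_m$ is obtained from $C_5$ by replacing one vertex by an independent set $I$ of $\frac{m-3}{3}$ vertices each adjacent to both neighbours of the replaced vertex, then adding a new vertex adjacent to all vertices of $I$. *)

theory Defs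
  imports "Jordan_Normal_Form.Char_Poly"
begin

definition adj_matrix :: "nat \<Rightarrow> nat set set \<Rightarrow> real mat" where
  "adj_matrix n E = mat n n (\<lambda>(i, j). if {i, j} \<in> E then 1 else 0)"

definition lambda_max :: "nat \<Rightarrow> nat set set \<Rightarrow> real" where
  "lambda_max n E = Max {x. eigenvalue (adj_matrix n E) x}"

text \<open>L_m: 5-cycle u1..u5 = 0..4; k = (m-6)/2 vertices 5..<5+k adjacent to u1 (=0)
  and u3 (=2); one pendant vertex 5+k adjacent to u1 (=0).  It has 6+k vertices and m edges.\<close>
definition L_k :: "nat \<Rightarrow> nat" where "L_k m = (m - 6) div 2"

definition L_n :: "nat \<Rightarrow> nat" where "L_n m = L_k m + 6"

definition L_edges :: "nat \<Rightarrow> nat set set" where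
  "L_edges m =
     {{i, (i + 1) mod 5} | i. i < 5}
   \<union> {{0, v} | v. v \<in> {5..<5 + L_k m}}
   \<union> {{2, v} | v. v \<in> {5..<5 + L_k m}}
   \<union> {{0, 5 + L_k m}}"

text \<open>Y_m: C5 = u1..u5 with u1 replaced by an independent set I of s = (m-3)/3 vertices
  adjacent to u2 and u5, plus a new vertex adjacent to all of I.
  Encoding: u2,u3,u4,u5 = 0,1,2,3; I = {4..<4+s}; new vertex 4+s.
  It has s+5 vertices and m edges.\<close>
definition Y_s :: "nat \<Rightarrow> nat" where "Y_s m = (m - 3) div 3"

definition Y_n :: "nat \<Rightarrow> nat" where "Y_n m = Y_s m + 5"

definition Y_edges :: "nat \<Rightarrow> nat set set" where
  "Y_edges m =
     {{0, 1}, {1, 2}, {2, 3}}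
   \<union> {{0, v} | v. v \<in> {4..<4 + Y_s m}}
   \<union> {{3, v} | v. v \<in> {4..<4 + Y_s m}}
   \<union> {{v, 4 + Y_s m} | v. v \<in> {4..<4 + Y_s m}}"

definition lambda_L :: "nat \<Rightarrow> real" where "lambda_L m = lambda_max (L_n m) (L_edges m)"
definition lambda_Y :: "nat \<Rightarrow> real" where "lambda_Y m = lambda_max (Y_n m) (Y_edges m)"

end

theory Submission
  imports Defs Complex_Main
begin

definition AL :: "real \<Rightarrow> real" where "AL x = x^7 + x^6 - 7*x^3 - 3*x^2 + 6*x + 2"
definition BL :: "real \<Rightarrow> real" where "BL x = 6*x^5 + 6*x^4 - 15*x^3 - 9*x^2 + 9*x + 3"
definition AY :: "real \<Rightarrow> real" where "AY x = x^4 - x^3 + 2*x^2 - 3*x - 1"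
definition BY :: "real \<Rightarrow> real" where "BY x = 6*x^2 - 6*x - 2"


lemma P3: assumes "x \<ge> 5" shows "AY x * BL x - AL x * BY x < 0"
proof -
  define z where "z = x - 5"
  have z: "z \<ge> 0" "x = z + 5" using assms by (auto simp: z_def)
  have "AY x * BL x - AL x * BY x = -(34944 + 58384*z + 40884*z^2 + 15566*z^3 + 3484*z^4 + 459*z^5 + 33*z^6 + z^7)"
    unfolding AL_def BL_def AY_def BY_def z(2) by (simp add: eval_nat_numeral algebra_simps)
  moreover have "0 < 34944 + 58384*z + 40884*z^2 + 15566*z^3 + 3484*z^4 + 459*z^5 + 33*z^6 + z^7"
    using z(1) by (intro add_pos_nonneg) auto
  ultimately show ?thesis by linarith
qed

lemma P2: assumes "r \<ge> 7" shows "AL r - r * BL r > 0"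
proof -
  define z where "z = r - 7"
  have z: "z \<ge> 0" "r = z + 7" using assms by (auto simp: z_def)
  have "AL r - r * BL r = 170592 + 268012*z + 156732*z^2 + 47217*z^3 + 8135*z^4 + 813*z^5 + 44*z^6 + z^7"
    unfolding AL_def BL_def z(2) by (simp add: eval_nat_numeral algebra_simps)
  moreover have "0 < 170592 + 268012*z + 156732*z^2 + 47217*z^3 + 8135*z^4 + 813*z^5 + 44*z^6 + z^7"
    using z(1) by (intro add_pos_nonneg) auto
  ultimately show ?thesis by linarith
qed

lemma P4: assumes "r \<ge> 7" shows "AY r - r * BY r > 0"
proof -
  define z where "z = r - 7"
  have z: "z \<ge> 0" "r = z + 7" using assms by (auto simp: z_def)
  have "AY r - r * BY r = 384 + 454*z + 155*z^2 + 21*z^3 + z^4"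
    unfolding AY_def BY_def z(2) by (simp add: eval_nat_numeral algebra_simps)
  moreover have "0 < 384 + 454*z + 155*z^2 + 21*z^3 + z^4"
    using z(1) by (intro add_pos_nonneg) auto
  ultimately show ?thesis by linarith
qed

lemma BL_pos: assumes "x \<ge> 5" shows "BL x > 0"
proof -
  define z where "z = x - 5"
  have z: "z \<ge> 0" "x = z + 5" using assms by (auto simp: z_def)
  have "BL x = 20448 + 20544*z + 8166*z^2 + 1605*z^3 + 156*z^4 + 6*z^5"
    unfolding BL_def z(2) by (simp add: eval_nat_numeral algebra_simps)
  moreover have "0 < 20448 + 20544*z + 8166*z^2 + 1605*z^3 + 156*z^4 + 6*z^5"
    using z(1) by (intro add_pos_nonneg) auto
  ultimately show ?thesis by linarith
qed

lemma P1: assumes "r \<ge> 7" shows "AL 5 - r * BL 5 < 0"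
  using assms by (simp add: AL_def BL_def)

lemma L_root: assumes "r \<ge> 7" shows "\<exists>x. 5 \<le> x \<and> x \<le> r \<and> AL x - r * BL x = 0"
proof -
  have c: "continuous_on {5..r} (\<lambda>x. AL x - r * BL x)"
    unfolding AL_def BL_def by (intro continuous_intros)
  show ?thesis using IVT'[of "\<lambda>x. AL x - r * BL x" 5 0 r] P1[OF assms] P2[OF assms] assms c
    by force
qed

lemma Y_root: assumes "r \<ge> 7" "5 \<le> x" "x \<le> r" "AY x - r * BY x < 0"
  shows "\<exists>y. x < y \<and> AY y - r * BY y = 0"
proof -
  have c: "continuous_on {x..r} (\<lambda>x. AY x - r * BY x)"
    unfolding AY_def BY_def by (intro continuous_intros)
  obtain y where "x \<le> y" "y \<le> r" "AY y - r * BY y = 0"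
    using IVT'[of "\<lambda>x. AY x - r * BY x" x 0 r] P4[OF assms(1)] assms c by force
  moreover have "y \<noteq> x" using assms(4) calculation(3) by auto
  ultimately show ?thesis by force
qed


lemma adj_carrier: "adj_matrix n E \<in> carrier_mat n n"
  by (simp add: adj_matrix_def)

lemma adj_mult: assumes "i < n" "dim_vec v = n"
  shows "(adj_matrix n E *\<^sub>v v) $ i = (\<Sum>j<n. (if {i,j} \<in> E then 1 else 0) * v $ j)"
  using assms by (simp add: adj_matrix_def scalar_prod_def row_def lessThan_atLeast0)

lemma eig_finite: "finite {x. eigenvalue (adj_matrix n E) x}"
proof -
  have c: "char_poly (adj_matrix n E) \<noteq> 0"
    using degree_monic_char_poly[OF adj_carrier[of n E]] by auto
  have "{x. eigenvalue (adj_matrix n E) x} = {x. poly (char_poly (adj_matrix n E)) x = 0}"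
    using eigenvalue_root_char_poly[OF adj_carrier[of n E]] by auto
  then show ?thesis using poly_roots_finite[OF c] by simp
qed

lemma eig_of_vec:
  assumes "dim_vec v = n" "i0 < n" "v $ i0 \<noteq> 0"
   and rows: "\<And>i. i < n \<Longrightarrow> (\<Sum>j<n. (if {i,j} \<in> E then 1 else 0) * v $ j) = y * v $ i"
  shows "eigenvalue (adj_matrix n E) y"
  unfolding eigenvalue_def eigenvector_def
proof (intro exI conjI)
  have dr: "dim_row (adj_matrix n E) = n" by (simp add: adj_matrix_def)
  show "v \<in> carrier_vec (dim_row (adj_matrix n E))" unfolding dr using assms(1) by (intro carrier_vecI) simp
  show "v \<noteq> 0\<^sub>v (dim_row (adj_matrix n E))"
  proof
    assume "v = 0\<^sub>v (dim_row (adj_matrix n E))"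
    then have "v $ i0 = 0" unfolding dr using assms(2) by simp
    then show False using assms(3) by simp
  qed
  show "adj_matrix n E *\<^sub>v v = y \<cdot>\<^sub>v v"
  proof (rule eq_vecI)
    fix i assume "i < dim_vec (y \<cdot>\<^sub>v v)"
    then have i: "i < n" using assms(1) by simp
    show "(adj_matrix n E *\<^sub>v v) $ i = (y \<cdot>\<^sub>v v) $ i"
      unfolding adj_mult[OF i assms(1)] rows[OF i] using i assms(1) by simp
  next
    show "dim_vec (adj_matrix n E *\<^sub>v v) = dim_vec (y \<cdot>\<^sub>v v)" using dr assms(1) by simp
  qed
qed
lemma eig_upper:
  assumes pos: "\<And>i. i < n \<Longrightarrow> u i > 0"
   and row: "\<And>i. i < n \<Longrightarrow> (\<Sum>j<n. (if {i,j} \<in> E then 1 else 0) * u j) \<le> \<mu> * u i"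
   and ev: "eigenvalue (adj_matrix n E) x"
  shows "x \<le> \<mu>"
proof -
  obtain v where v: "eigenvector (adj_matrix n E) v x" using ev eigenvalue_def by auto
  have dr: "dim_row (adj_matrix n E) = n" by (simp add: adj_matrix_def)
  have vc: "v \<in> carrier_vec n" and nz: "v \<noteq> 0\<^sub>v n" and mv: "adj_matrix n E *\<^sub>v v = x \<cdot>\<^sub>v v"
    using v unfolding eigenvector_def dr by blast+
  have dv: "dim_vec v = n" using vc by (rule carrier_vecD)
  obtain i0 where i0: "i0 < n" "v $ i0 \<noteq> 0"
  proof (rule ccontr)
    assume "\<not> thesis"
    then have "\<forall>i<n. v $ i = 0" using that by blast
    then have "v = 0\<^sub>v n" using dv by (intro eq_vecI) auto
    then show False using nz by simp
  qed
  let ?a = "\<lambda>i j. (if {i,j} \<in> E then 1 else (0::real))"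
  have eq: "x * v $ i = (\<Sum>j<n. ?a i j * v $ j)" if "i < n" for i
  proof -
    have "(adj_matrix n E *\<^sub>v v) $ i = (x \<cdot>\<^sub>v v) $ i" using mv by simp
    then show ?thesis using that dv by (simp add: adj_mult)
  qed
  have ineq: "\<bar>x\<bar> * \<bar>v $ i\<bar> \<le> (\<Sum>j<n. ?a i j * \<bar>v $ j\<bar>)" if "i < n" for i
  proof -
    have "\<bar>x\<bar> * \<bar>v $ i\<bar> = \<bar>\<Sum>j<n. ?a i j * v $ j\<bar>" using eq[OF that] by (metis abs_mult)
    also have "\<dots> \<le> (\<Sum>j<n. \<bar>?a i j * v $ j\<bar>)" by (rule sum_abs)
    also have "\<dots> = (\<Sum>j<n. ?a i j * \<bar>v $ j\<bar>)" by (intro sum.cong) (auto simp: abs_mult)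
    finally show ?thesis .
  qed
  have "(\<Sum>i<n. u i * (\<bar>x\<bar> * \<bar>v $ i\<bar>)) \<le> (\<Sum>i<n. u i * (\<Sum>j<n. ?a i j * \<bar>v $ j\<bar>))"
    by (intro sum_mono mult_left_mono ineq) (auto intro: less_imp_le pos)
  also have "\<dots> = (\<Sum>i<n. \<Sum>j<n. u i * (?a i j * \<bar>v $ j\<bar>))"
    by (simp only: sum_distrib_left)
  also have "\<dots> = (\<Sum>j<n. \<Sum>i<n. u i * (?a i j * \<bar>v $ j\<bar>))"
    by (rule sum.swap)
  also have "\<dots> = (\<Sum>j<n. \<bar>v $ j\<bar> * (\<Sum>i<n. ?a j i * u i))"
  proof (rule sum.cong[OF refl])
    fix j
    have "(\<Sum>i<n. u i * (?a i j * \<bar>v $ j\<bar>)) = (\<Sum>i<n. \<bar>v $ j\<bar> * (?a j i * u i))"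
      by (rule sum.cong[OF refl]) (simp add: insert_commute)
    also have "\<dots> = \<bar>v $ j\<bar> * (\<Sum>i<n. ?a j i * u i)" by (simp only: sum_distrib_left)
    finally show "(\<Sum>i<n. u i * (?a i j * \<bar>v $ j\<bar>)) = \<bar>v $ j\<bar> * (\<Sum>i<n. ?a j i * u i)" .
  qed
  also have "\<dots> \<le> (\<Sum>j<n. \<bar>v $ j\<bar> * (\<mu> * u j))"
    by (intro sum_mono mult_left_mono row) auto
  finally have A0: "(\<Sum>i<n. u i * (\<bar>x\<bar> * \<bar>v $ i\<bar>)) \<le> (\<Sum>j<n. \<bar>v $ j\<bar> * (\<mu> * u j))" .
  have e1: "(\<Sum>i<n. u i * (\<bar>x\<bar> * \<bar>v $ i\<bar>)) = \<bar>x\<bar> * (\<Sum>i<n. u i * \<bar>v $ i\<bar>)"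
    by (simp only: sum_distrib_left) (rule sum.cong[OF refl], simp)
  have e2: "(\<Sum>j<n. \<bar>v $ j\<bar> * (\<mu> * u j)) = \<mu> * (\<Sum>i<n. u i * \<bar>v $ i\<bar>)"
    by (simp only: sum_distrib_left) (rule sum.cong[OF refl], simp)
  have A: "\<bar>x\<bar> * (\<Sum>i<n. u i * \<bar>v $ i\<bar>) \<le> \<mu> * (\<Sum>i<n. u i * \<bar>v $ i\<bar>)"
    using A0 unfolding e1 e2 .
  have "(\<Sum>i<n. u i * \<bar>v $ i\<bar>) > 0"
  proof (rule sum_pos2[of _ i0])
    show "u i0 * \<bar>v $ i0\<bar> > 0" using pos[OF i0(1)] i0(2) by simp
  qed (use i0 in \<open>auto intro!: mult_nonneg_nonneg less_imp_le[OF pos]\<close>)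
  with A have "\<bar>x\<bar> \<le> \<mu>" by simp
  then show ?thesis by simp
qed

lemma lambda_max_eq:
  assumes "eigenvalue (adj_matrix n E) x" "\<And>y. eigenvalue (adj_matrix n E) y \<Longrightarrow> y \<le> x"
  shows "lambda_max n E = x"
  unfolding lambda_max_def
proof (rule Max_eqI)
  show "finite {x. eigenvalue (adj_matrix n E) x}" by (rule eig_finite)
  show "\<And>y. y \<in> {x. eigenvalue (adj_matrix n E) x} \<Longrightarrow> y \<le> x" using assms(2) by blast
  show "x \<in> {x. eigenvalue (adj_matrix n E) x}" using assms(1) by blast
qed

lemma lambda_max_ge:
  assumes "eigenvalue (adj_matrix n E) x"
  shows "x \<le> lambda_max n E"
  unfolding lambda_max_def
proof (rule Max_ge)
  show "finite {x. eigenvalue (adj_matrix n E) x}" by (rule eig_finite)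
  show "x \<in> {x. eigenvalue (adj_matrix n E) x}" using assms(1) by blast
qed


lemma cyc5: "{{i, (i + 1) mod 5} | i. i < (5::nat)} = {{0,1},{1,2},{2,3},{3,4},{4,0}}"
proof -
  have m: "(0+1) mod 5 = (1::nat)" "(1+1) mod 5 = (2::nat)" "(2+1) mod 5 = (3::nat)"
     "(3+1) mod 5 = (4::nat)" "(4+1) mod 5 = (0::nat)" by simp_all
  have "{{i, (i + 1) mod 5} | i. i < (5::nat)} = (\<lambda>i. {i, (i + 1) mod 5}) ` {..<5}" by blast
  also have "{..<(5::nat)} = {0,1,2,3,4}" by (auto simp: lessThan_def)
  also have "(\<lambda>i. {i, (i + 1) mod 5}) ` {0,1,2,3,4::nat} = {{0,1},{1,2},{2,3},{3,4},{4,0}}"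
    using m by (simp only: image_insert image_empty)
  finally show ?thesis .
qed

lemma mem_star1: "({i,j} \<in> {{a,v} | v. v \<in> K}) = ((i=a \<and> j\<in>K) \<or> (j=a \<and> i\<in>K))"
  by (auto simp: doubleton_eq_iff)

lemma mem_star2: "({i,j} \<in> {{v,a} | v. v \<in> K}) = ((i=a \<and> j\<in>K) \<or> (j=a \<and> i\<in>K))"
  by (auto simp: doubleton_eq_iff)

definition adjL :: "nat \<Rightarrow> nat \<Rightarrow> nat \<Rightarrow> bool" where
 "adjL k i j = (((((i=0\<and>j=1 \<or> i=1\<and>j=0) \<or> ((i=1\<and>j=2 \<or> i=2\<and>j=1) \<or> ((i=2\<and>j=3 \<or> i=3\<and>j=2) \<or>
   ((i=3\<and>j=4 \<or> i=4\<and>j=3) \<or> ((i=4\<and>j=0 \<or> i=0\<and>j=4) \<or> False))))) \<or>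
   (i=0 \<and> j \<in> {5..<5+k} \<or> j=0 \<and> i \<in> {5..<5+k})) \<or> (i=2 \<and> j \<in> {5..<5+k} \<or> j=2 \<and> i \<in> {5..<5+k}))
   \<or> ((i=0\<and>j=5+k \<or> i=5+k\<and>j=0) \<or> False))"

lemma L_adj: "({i,j} \<in> L_edges m) = adjL (L_k m) i j"
  unfolding L_edges_def cyc5 adjL_def
  by (simp only: Un_iff insert_iff empty_iff mem_star1 doubleton_eq_iff)

lemma sumL: "(\<Sum>j<(k::nat)+6. f j) = f 0 + f 1 + f 2 + f 3 + f 4 + (\<Sum>j\<in>{5..<5+k}. f j) + f (5+k)"
proof -
  have e: "k+6 = Suc (5+k)" by simp
  have "(\<Sum>j<k+6. f j) = (\<Sum>j<5+k. f j) + f (5+k)"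
    unfolding e by (rule sum.lessThan_Suc)
  also have "(\<Sum>j<5+k. f j) = (\<Sum>j<5. f j) + (\<Sum>j\<in>{5..<5+k}. f j)"
    using sum.atLeastLessThan_concat[of 0 5 "5+k" f] by (simp add: atLeast0LessThan)
  also have "(\<Sum>j<5. f j) = f 0 + f 1 + f 2 + f 3 + f 4"
    by (simp add: numeral_eq_Suc)
  finally show ?thesis by simp
qed

lemma sum_K: "(\<Sum>j\<in>{5..<5+k}. (if adjL k i j then 1 else 0) * (u j::real)) =
   (if i = 0 \<or> i = 2 then (\<Sum>j\<in>{5..<5+k}. u j) else 0)"
proof (cases "i = 0 \<or> i = 2")
  case True
  have "(\<Sum>j\<in>{5..<5+k}. (if adjL k i j then 1 else 0) * (u j::real)) = (\<Sum>j\<in>{5..<5+k}. u j)"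
    by (rule sum.cong[OF refl]) (use True in \<open>auto simp: adjL_def\<close>)
  then show ?thesis using True by simp
next
  case False
  have "(\<Sum>j\<in>{5..<5+k}. (if adjL k i j then 1 else 0) * (u j::real)) = 0"
    by (rule sum.neutral) (use False in \<open>auto simp: adjL_def\<close>)
  then show ?thesis using False by simp
qed


definition uL :: "real \<Rightarrow> real \<Rightarrow> real \<Rightarrow> real \<Rightarrow> real \<Rightarrow> real \<Rightarrow> nat \<Rightarrow> nat \<Rightarrow> real" where
 "uL a b c d e p k j = (if j = 0 then a else if j = 1 then b else if j = 2 then c
   else if j = 3 then d else if j = 4 then e else if j < 5 + k then b else p)"

lemma L_rows_abs:
  fixes a b c d e p x :: real and k :: nat
  assumes R0: "b + e + real k*b + p = x*a" and R1: "a + c = x*b" and R2: "b + d + real k*b = x*c"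
    and R3: "c + e = x*d" and R4: "d + a = x*e" and RP: "a = x*p" and i: "i < k + 6"
  shows "(\<Sum>j<k+6. (if adjL k i j then 1 else 0) * uL a b c d e p k j) = x * uL a b c d e p k i"
proof -
  have sK: "(\<Sum>j\<in>{5..<5+k}. uL a b c d e p k j) = k * b"
    by (simp add: uL_def)
  have S: "(\<Sum>j<k+6. (if adjL k i j then 1 else 0) * uL a b c d e p k j) =
     (if adjL k i 0 then a else 0) + (if adjL k i 1 then b else 0) + (if adjL k i 2 then c else 0)
     + (if adjL k i 3 then d else 0) + (if adjL k i 4 then e else 0)
     + (if i = 0 \<or> i = 2 then k * b else 0) + (if adjL k i (5+k) then p else 0)"
    unfolding sumL sum_K sK by (simp add: uL_def)
  consider "i = 0" | "i = 1" | "i = 2" | "i = 3" | "i = 4" | "5 \<le> i \<and> i < 5 + k" | "i = 5 + k"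
    using i by linarith
  then show ?thesis
  proof cases
    case 1
    then show ?thesis unfolding S using R0 by (simp add: adjL_def uL_def algebra_simps)
  next
    case 2
    then show ?thesis unfolding S using R1 by (simp add: adjL_def uL_def)
  next
    case 3
    then show ?thesis unfolding S using R2 by (simp add: adjL_def uL_def algebra_simps)
  next
    case 4
    then show ?thesis unfolding S using R3 by (simp add: adjL_def uL_def)
  next
    case 5
    then show ?thesis unfolding S using R4 by (simp add: adjL_def uL_def)
  next
    case 6
    then show ?thesis unfolding S using R1 by (simp add: adjL_def uL_def)
  next
    case 7
    then show ?thesis unfolding S using RP by (simp add: adjL_def uL_def)
  qed
qed

definition QL :: "real \<Rightarrow> real" where "QL x = x*(x^2+x-1)"
definition NL :: "real \<Rightarrow> real" where "NL x = x^3+x^2-2*x-1"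

lemma L_polys:
  fixes x r :: real and k :: nat
  assumes kr: "real k = 3*r - 3" and root: "AL x - r * BL x = 0"
  defines "a \<equiv> QL x * x * (x^2-1)" and "b \<equiv> (QL x + NL x)*(x^2-1)" and "c \<equiv> NL x * x * (x^2-1)"
    and "d \<equiv> (QL x + x * NL x) * x" and "e \<equiv> (NL x + x * QL x) * x" and "p \<equiv> QL x * (x^2-1)"
  shows "b + e + real k*b + p = x*a" "a + c = x*b" "b + d + real k*b = x*c"
    "c + e = x*d" "d + a = x*e" "a = x*p"
proof -
  have "x*a - (b + e + real k*b + p) = AL x - r * BL x"
    unfolding a_def b_def e_def p_def QL_def NL_def AL_def BL_def kr by (simp add: eval_nat_numeral algebra_simps)
  then show "b + e + real k*b + p = x*a" using root by simp
  have "x*c - (b + d + real k*b) = AL x - r * BL x"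
    unfolding c_def b_def d_def QL_def NL_def AL_def BL_def kr by (simp add: eval_nat_numeral algebra_simps)
  then show "b + d + real k*b = x*c" using root by simp
  show "a + c = x*b" unfolding a_def b_def c_def by (simp add: eval_nat_numeral algebra_simps)
  show "c + e = x*d" unfolding c_def d_def e_def by (simp add: eval_nat_numeral algebra_simps)
  show "d + a = x*e" unfolding a_def d_def e_def by (simp add: eval_nat_numeral algebra_simps)
  show "a = x*p" unfolding a_def p_def by (simp add: eval_nat_numeral algebra_simps)
qed


definition adjY :: "nat \<Rightarrow> nat \<Rightarrow> nat \<Rightarrow> bool" where
 "adjY s i j = ((((((i=0\<and>j=1 \<or> i=1\<and>j=0) \<or> ((i=1\<and>j=2 \<or> i=2\<and>j=1) \<or> ((i=2\<and>j=3 \<or> i=3\<and>j=2) \<or> False))) \<or>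
   (i=0 \<and> j \<in> {4..<4+s} \<or> j=0 \<and> i \<in> {4..<4+s})) \<or> (i=3 \<and> j \<in> {4..<4+s} \<or> j=3 \<and> i \<in> {4..<4+s})) \<or>
   (i=4+s \<and> j \<in> {4..<4+s} \<or> j=4+s \<and> i \<in> {4..<4+s})))"

lemma Y_adj: "({i,j} \<in> Y_edges m) = adjY (Y_s m) i j"
  unfolding Y_edges_def adjY_def
  by (simp only: Un_iff insert_iff empty_iff mem_star1 mem_star2 doubleton_eq_iff)

lemma sumY: "(\<Sum>j<(s::nat)+5. f j) = f 0 + f 1 + f 2 + f 3 + (\<Sum>j\<in>{4..<4+s}. f j) + f (4+s)"
proof -
  have e: "s+5 = Suc (4+s)" by simp
  have "(\<Sum>j<s+5. f j) = (\<Sum>j<4+s. f j) + f (4+s)"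
    unfolding e by (rule sum.lessThan_Suc)
  also have "(\<Sum>j<4+s. f j) = (\<Sum>j<4. f j) + (\<Sum>j\<in>{4..<4+s}. f j)"
    using sum.atLeastLessThan_concat[of 0 4 "4+s" f] by (simp add: atLeast0LessThan)
  also have "(\<Sum>j<4. f j) = f 0 + f 1 + f 2 + f 3"
    by (simp add: numeral_eq_Suc)
  finally show ?thesis by simp
qed

lemma sum_I: "(\<Sum>j\<in>{4..<4+s}. (if adjY s i j then 1 else 0) * (u j::real)) =
   (if i = 0 \<or> i = 3 \<or> i = 4 + s then (\<Sum>j\<in>{4..<4+s}. u j) else 0)"
proof (cases "i = 0 \<or> i = 3 \<or> i = 4 + s")
  case True
  have "(\<Sum>j\<in>{4..<4+s}. (if adjY s i j then 1 else 0) * (u j::real)) = (\<Sum>j\<in>{4..<4+s}. u j)"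
    by (rule sum.cong[OF refl]) (use True in \<open>auto simp: adjY_def\<close>)
  then show ?thesis using True by simp
next
  case False
  have "(\<Sum>j\<in>{4..<4+s}. (if adjY s i j then 1 else 0) * (u j::real)) = 0"
    by (rule sum.neutral) (use False in \<open>auto simp: adjY_def\<close>)
  then show ?thesis using False by simp
qed

definition vY :: "real \<Rightarrow> real \<Rightarrow> real \<Rightarrow> real \<Rightarrow> nat \<Rightarrow> nat \<Rightarrow> real" where
 "vY A B C D s j = (if j = 0 \<or> j = 3 then A else if j = 1 \<or> j = 2 then B
   else if j < 4 + s then C else D)"

lemma Y_rows_abs:
  fixes A B C D y :: real and s :: nat
  assumes RA: "B + real s*C = y*A" and RB: "A + B = y*B" and RI: "A + A + D = y*C"
    and RW: "real s * C = y*D" and i: "i < s + 5"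
  shows "(\<Sum>j<s+5. (if adjY s i j then 1 else 0) * vY A B C D s j) = y * vY A B C D s i"
proof -
  have sI: "(\<Sum>j\<in>{4..<4+s}. vY A B C D s j) = s * C"
    by (simp add: vY_def)
  have S: "(\<Sum>j<s+5. (if adjY s i j then 1 else 0) * vY A B C D s j) =
     (if adjY s i 0 then A else 0) + (if adjY s i 1 then B else 0) + (if adjY s i 2 then B else 0)
     + (if adjY s i 3 then A else 0)
     + (if i = 0 \<or> i = 3 \<or> i = 4 + s then s * C else 0) + (if adjY s i (4+s) then D else 0)"
    unfolding sumY sum_I sI by (simp add: vY_def)
  consider "i = 0" | "i = 1" | "i = 2" | "i = 3" | "4 \<le> i \<and> i < 4 + s" | "i = 4 + s"
    using i by linarith
  then show ?thesis
  proof cases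
    case 1
    then show ?thesis unfolding S using RA by (simp add: adjY_def vY_def)
  next
    case 2
    then show ?thesis unfolding S using RB by (simp add: adjY_def vY_def)
  next
    case 3
    then show ?thesis unfolding S using RB by (simp add: adjY_def vY_def algebra_simps)
  next
    case 4
    then show ?thesis unfolding S using RA by (simp add: adjY_def vY_def algebra_simps)
  next
    case 5
    then show ?thesis unfolding S using RI by (simp add: adjY_def vY_def)
  next
    case 6
    then show ?thesis unfolding S using RW by (simp add: adjY_def vY_def)
  qed
qed

lemma Y_polys:
  fixes y r :: real and s :: nat
  assumes sr: "real s = 2*r - 1" and root: "AY y - r * BY y = 0"
  defines "A \<equiv> (y-1)*real s*y" and "B \<equiv> real s*y" and "C \<equiv> (y^2-y-1)*y" and "D \<equiv> real s*(y^2-y-1)"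
  shows "B + real s*C = y*A" "A + B = y*B" "A + A + D = y*C" "real s * C = y*D"
proof -
  have "y*C - (A + A + D) = AY y - r * BY y"
    unfolding A_def C_def D_def AY_def BY_def sr by (simp add: eval_nat_numeral algebra_simps)
  then show "A + A + D = y*C" using root by simp
  show "B + real s*C = y*A" unfolding A_def B_def C_def by (simp add: eval_nat_numeral algebra_simps)
  show "A + B = y*B" unfolding A_def B_def by (simp add: eval_nat_numeral algebra_simps)
  show "real s * C = y*D" unfolding C_def D_def by (simp add: eval_nat_numeral algebra_simps)
qed


lemma QN_pos: assumes x5: "x \<ge> (5::real)" shows "QL x > 0" "NL x > 0" "x^2 - 1 > 0"
proof -
  have "5 * 5 \<le> x * x" using x5 by (intro mult_mono) auto
  then have a: "x^2 \<ge> 25" by (simp add: power2_eq_square)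
  have "x * 25 \<le> x * x^2" using a x5 by (intro mult_left_mono) auto
  then have b: "x^3 \<ge> 25 * x" by (simp add: power3_eq_cube power2_eq_square mult_ac)
  have c: "x^2 + x - 1 > 0" using a x5 by linarith
  show "QL x > 0" unfolding QL_def using c x5 by (intro mult_pos_pos) auto
  show "NL x > 0" unfolding NL_def using a b x5 by linarith
  show "x^2 - 1 > 0" using a by linarith
qed

theorem lemma2p2:
  fixes m t :: nat
  assumes "m \<ge> 38" and "even m" and "t > 0" and "m = 3 * t"
  shows "lambda_L m < lambda_Y m"
proof -
  obtain r' where t: "t = 2 * r'" using assms(2,4) by (metis dvd_def even_mult_iff odd_numeral)
  have m: "m = 6 * r'" using t assms(4) by simp
  have r7: "r' \<ge> 7" using m assms(1) by simp
  define r where "r = real r'"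
  have r7': "r \<ge> 7" using r7 by (simp add: r_def)
  define k where "k = L_k m"
  have kk: "k = 3 * r' - 3" unfolding k_def L_k_def m by simp
  have kr: "real k = 3*r - 3" using kk r7 by (simp add: r_def of_nat_diff)
  have Ln: "L_n m = k + 6" by (simp add: L_n_def k_def)
  define s where "s = Y_s m"
  have ss: "s = 2 * r' - 1" unfolding s_def Y_s_def m by simp
  have sr: "real s = 2*r - 1" using ss r7 by (simp add: r_def of_nat_diff)
  have Yn: "Y_n m = s + 5" by (simp add: Y_n_def s_def)
  obtain x where x: "5 \<le> x" "x \<le> r" "AL x - r * BL x = 0" using L_root[OF r7'] by blast
  have "AY x - r * BY x < 0"
  proof -
    have "BL x * (AY x - r * BY x) < 0" using P3[OF x(1)] x(3) by (simp add: algebra_simps)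
    then show ?thesis using BL_pos[OF x(1)] by (simp add: mult_less_0_iff)
  qed
  then obtain y where y: "x < y" "AY y - r * BY y = 0" using Y_root[OF r7' x(1) x(2)] by blast
  define a where "a = QL x * x * (x^2-1)"
  define b where "b = (QL x + NL x)*(x^2-1)"
  define c where "c = NL x * x * (x^2-1)"
  define d where "d = (QL x + x * NL x) * x"
  define e where "e = (NL x + x * QL x) * x"
  define p where "p = QL x * (x^2-1)"
  note LP = L_polys[OF kr x(3), folded a_def b_def c_def d_def e_def p_def]
  have pos: "uL a b c d e p k j > 0" for j
  proof -
    have "a > 0" "b > 0" "c > 0" "d > 0" "e > 0" "p > 0"
      unfolding a_def b_def c_def d_def e_def p_def using QN_pos[OF x(1)] x(1)
      by (auto intro!: mult_pos_pos add_pos_pos)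
    then show ?thesis unfolding uL_def by auto
  qed
  have rowsL: "(\<Sum>j<k+6. (if {i,j} \<in> L_edges m then 1 else 0) * uL a b c d e p k j) = x * uL a b c d e p k i"
    if "i < k + 6" for i
    using L_rows_abs[OF LP that] by (simp add: L_adj k_def)
  have evL: "eigenvalue (adj_matrix (k+6) (L_edges m)) x"
  proof (rule eig_of_vec[of "vec (k+6) (uL a b c d e p k)" _ 0])
    show "vec (k + 6) (uL a b c d e p k) $ 0 \<noteq> 0" using pos[of 0] by simp
    fix i assume i: "i < k + 6"
    have "(\<Sum>j<k+6. (if {i,j} \<in> L_edges m then 1 else 0) * vec (k + 6) (uL a b c d e p k) $ j)
        = (\<Sum>j<k+6. (if {i,j} \<in> L_edges m then 1 else 0) * uL a b c d e p k j)"
      by (intro sum.cong) auto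
    then show "(\<Sum>j<k+6. (if {i,j} \<in> L_edges m then 1 else 0) * vec (k + 6) (uL a b c d e p k) $ j)
        = x * vec (k + 6) (uL a b c d e p k) $ i" using rowsL[OF i] i by simp
  qed auto
  have lamL: "lambda_L m = x"
    unfolding lambda_L_def Ln
  proof (rule lambda_max_eq[OF evL])
    fix z assume ez: "eigenvalue (adj_matrix (k+6) (L_edges m)) z"
    show "z \<le> x"
      by (rule eig_upper[where u="uL a b c d e p k", OF _ _ ez]) (use pos rowsL in auto)
  qed
  have y5: "y > 5" using x y by simp
  define A where "A = (y-1)*real s*y"
  define B where "B = real s*y"
  define C where "C = (y^2-y-1)*y"
  define D where "D = real s*(y^2-y-1)"
  note YP = Y_polys[OF sr y(2), folded A_def B_def C_def D_def]
  have rowsY: "(\<Sum>j<s+5. (if {i,j} \<in> Y_edges m then 1 else 0) * vY A B C D s j) = y * vY A B C D s i"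
    if "i < s + 5" for i
    using Y_rows_abs[OF YP that] by (simp add: Y_adj s_def)
  have s0: "s > 0" using ss r7 by simp
  have B0: "B \<noteq> 0" unfolding B_def using s0 y5 by simp
  have evY: "eigenvalue (adj_matrix (s+5) (Y_edges m)) y"
  proof (rule eig_of_vec[of "vec (s+5) (vY A B C D s)" _ 1])
    show "vec (s + 5) (vY A B C D s) $ 1 \<noteq> 0" using B0 by (simp add: vY_def)
    fix i assume i: "i < s + 5"
    have "(\<Sum>j<s+5. (if {i,j} \<in> Y_edges m then 1 else 0) * vec (s + 5) (vY A B C D s) $ j)
        = (\<Sum>j<s+5. (if {i,j} \<in> Y_edges m then 1 else 0) * vY A B C D s j)"
      by (intro sum.cong) auto
    then show "(\<Sum>j<s+5. (if {i,j} \<in> Y_edges m then 1 else 0) * vec (s + 5) (vY A B C D s) $ j)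
        = y * vec (s + 5) (vY A B C D s) $ i" using rowsY[OF i] i by simp
  qed auto
  have "y \<le> lambda_Y m" unfolding lambda_Y_def Yn by (rule lambda_max_ge[OF evY])
  then show ?thesis using lamL y(1) by simp
qed

end
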